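(* Let $\hat G=(\hat V,\hat E,w)$ be a weighted graph admitting a valid partition, and let $\mathcal{C}=\{C_1,\dots,C_m\}$ ($m>1$) be the minimal valid partition of $\hat V$. Suppose there is a claw w.r.t. $\mathcal{C}$, say $\{y_m\mid y_1,y_2,y_3\}$ with $y_i\in C_i$ for $i\in\{1,2,3,m\}$ (after relabeling clusters). For each $i\in[4,m-1]$ fix an arbitrary representative $y_i\in C_i$, let $V'=\{y_1,\dots,y_m\}$, and let $\mathsf{w}=w(y_1,y_m)=w(y_2,y_m)=w(y_3,y_m)$. Call a pair $\{y_a,y_b\}\subseteq V'$ light if $w(y_a,y_b)<\mathsf{w}$. Let $\mathsf{C}\subseteq V'$ be a maximum clique in the graph on $V'$ whose edges are the light pairs, among cliques containing $y_1,y_2,y_3$. For each $y_i\in\mathsf{C}$ let $\Pi_i=(C_i,\ \bigcup_{\ell\ne i}C_\ell)$. Then $\hat G$ has a valid bi-partition if and only if $\Pi_i$ is valid for some $y_i\in\mathsf{C}$.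
   Context: Weights are symmetric, nonnegative, $0$ for non-edges. A partition $\mathcal{S}=(S_1,\dots,S_t)$, $t>1$, of $\hat V$ into nonempty disjoint sets is valid w.r.t. $\hat G$ if (i) for every triple of distinct vertices $v_i,v_j,v_k$ with $w_{ij}>\max\{w_{ik},w_{jk}\}$, either all three lie in the same part, or $v_i,v_j$ lie in one part and $v_k$ in another; and (ii) for every triple with $w_{ij}=w_{ik}>w_{jk}$, it is not the case that $v_j,v_k$ lie in the same part while $v_i$ lies in a different part. A valid bi-partition is a valid partition with two parts. The minimal valid partition is a valid partition $\mathcal{C}$ that refines every valid partition (each part of $\mathcal{C}$ is contained in some part of any other valid partition); it exists whenever a valid partition exists. Four vertices $\{v_i\mid v_j,v_k,v_\ell\}$ form a claw w.r.t. $\mathcal{C}$ if they lie in four different parts of $\mathcal{C}$ and $w_{ij}=w_{ik}=w_{i\ell}>\max\{w_{jk},w_{j\ell},w_{k\ell}\}$. *)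

theory Defs
  imports Complex_Main
begin

text \<open>Weighted graph: finite vertex set V with a symmetric nonnegative weight
function w (weight 0 encodes a non-edge).\<close>

definition weighted_graph :: "'a set \<Rightarrow> ('a \<Rightarrow> 'a \<Rightarrow> real) \<Rightarrow> bool" where
  "weighted_graph V w \<longleftrightarrow> finite V \<and> (\<forall>x\<in>V. \<forall>y\<in>V. w x y = w y x \<and> w x y \<ge> 0)"

definition is_partition :: "'a set \<Rightarrow> 'a set set \<Rightarrow> bool" where
  "is_partition V P \<longleftrightarrow> (\<forall>S\<in>P. S \<noteq> {}) \<and> (\<forall>S\<in>P. \<forall>T\<in>P. S \<noteq> T \<longrightarrow> S \<inter> T = {})
     \<and> \<Union>P = V \<and> finite P \<and> card P > 1"

definition same_part :: "'a set set \<Rightarrow> 'a \<Rightarrow> 'a \<Rightarrow> bool" where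
  "same_part P x y \<longleftrightarrow> (\<exists>S\<in>P. x \<in> S \<and> y \<in> S)"

definition valid_partition :: "'a set \<Rightarrow> ('a \<Rightarrow> 'a \<Rightarrow> real) \<Rightarrow> 'a set set \<Rightarrow> bool" where
  "valid_partition V w P \<longleftrightarrow> is_partition V P \<and>
     (\<forall>vi\<in>V. \<forall>vj\<in>V. \<forall>vk\<in>V. distinct [vi, vj, vk] \<longrightarrow>
        w vi vj > max (w vi vk) (w vj vk) \<longrightarrow>
          ((same_part P vi vj \<and> same_part P vi vk) \<or> (same_part P vi vj \<and> \<not> same_part P vi vk))) \<and>
     (\<forall>vi\<in>V. \<forall>vj\<in>V. \<forall>vk\<in>V. distinct [vi, vj, vk] \<longrightarrow>
        w vi vj = w vi vk \<longrightarrow> w vi vj > w vj vk \<longrightarrow>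
          \<not> (same_part P vj vk \<and> \<not> same_part P vi vj))"

definition valid_bipartition :: "'a set \<Rightarrow> ('a \<Rightarrow> 'a \<Rightarrow> real) \<Rightarrow> 'a set set \<Rightarrow> bool" where
  "valid_bipartition V w P \<longleftrightarrow> valid_partition V w P \<and> card P = 2"

definition refines :: "'a set set \<Rightarrow> 'a set set \<Rightarrow> bool" where
  "refines P Q \<longleftrightarrow> (\<forall>S\<in>P. \<exists>T\<in>Q. S \<subseteq> T)"

definition minimal_valid_partition :: "'a set \<Rightarrow> ('a \<Rightarrow> 'a \<Rightarrow> real) \<Rightarrow> 'a set set \<Rightarrow> bool" where
  "minimal_valid_partition V w C \<longleftrightarrow> valid_partition V w C \<and>
     (\<forall>P. valid_partition V w P \<longrightarrow> refines C P)"

definition is_claw :: "'a set set \<Rightarrow> ('a \<Rightarrow> 'a \<Rightarrow> real) \<Rightarrow> 'a \<Rightarrow> 'a \<Rightarrow> 'a \<Rightarrow> 'a \<Rightarrow> bool" where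
  "is_claw C w vi vj vk vl \<longleftrightarrow>
     (\<exists>Si\<in>C. \<exists>Sj\<in>C. \<exists>Sk\<in>C. \<exists>Sl\<in>C. distinct [Si, Sj, Sk, Sl] \<and>
        vi \<in> Si \<and> vj \<in> Sj \<and> vk \<in> Sk \<and> vl \<in> Sl) \<and>
     w vi vj = w vi vk \<and> w vi vk = w vi vl \<and>
     w vi vj > max (w vj vk) (max (w vj vl) (w vk vl))"

end

theory Submission
  imports Defs
begin

lemma vp_i:
  assumes "valid_partition V w P" "vi \<in> V" "vj \<in> V" "vk \<in> V" "distinct [vi, vj, vk]"
    "\<not> same_part P vi vj"
  shows "w vi vj \<le> max (w vi vk) (w vj vk)"
  using assms unfolding valid_partition_def by (meson not_le)

lemma vp_ii:
  assumes "valid_partition V w P" "vi \<in> V" "vj \<in> V" "vk \<in> V" "distinct [vi, vj, vk]"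
    "w vi vj = w vi vk" "w vi vj > w vj vk" "same_part P vj vk"
  shows "same_part P vi vj"
  using assms unfolding valid_partition_def by blast

lemma sp_AB: "same_part {A,B} x y \<longleftrightarrow> (x\<in>A \<and> y\<in>A) \<or> (x\<in>B \<and> y\<in>B)"
  unfolding same_part_def by auto

lemma not_sp:
  assumes "is_partition V C" "S \<in> C" "T \<in> C" "S \<noteq> T" "x \<in> S" "y \<in> T"
  shows "\<not> same_part C x y"
proof
  assume "same_part C x y"
  then obtain U where U: "U \<in> C" "x \<in> U" "y \<in> U" unfolding same_part_def by blast
  have "U = S" using assms U unfolding is_partition_def by blast
  moreover have "U = T" using assms U unfolding is_partition_def by blast
  ultimately show False using assms by simp
qed

lemma cross_le:
  assumes vP: "valid_partition V w {A,B}" and AB: "A \<inter> B = {}" "A \<subseteq> V" "B \<subseteq> V"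
    and sym: "\<forall>x\<in>V. \<forall>y\<in>V. w x y = w y x"
    and pqv: "p \<in> A" "q \<in> A" "v \<in> B" "p \<noteq> q"
  shows "w p v \<le> w p q"
proof (rule ccontr)
  assume "\<not> ?thesis" hence gt: "w p v > w p q" by simp
  have d: "p \<noteq> v" "q \<noteq> v" using AB pqv by auto
  have V: "p \<in> V" "q \<in> V" "v \<in> V" using AB pqv by auto
  have "w p v \<le> max (w p q) (w v q)"
    by (rule vp_i[OF vP]) (use V d pqv AB in \<open>auto simp: sp_AB\<close>)
  hence 1: "w p v \<le> w v q" using gt by (auto simp: max_def split: if_splits)
  have "w q v \<le> max (w q p) (w v p)"
    by (rule vp_i[OF vP]) (use V d pqv AB in \<open>auto simp: sp_AB\<close>)
  moreover have "w q v = w v q" "w q p = w p q" "w v p = w p v" using sym V by auto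
  ultimately have 2: "w v q \<le> w p v" using gt 1 by (auto simp: max_def split: if_splits)
  have "same_part {A,B} v p"
    by (rule vp_ii[OF vP, of v p q]) (use V d pqv 1 2 gt sym in \<open>auto simp: sp_AB\<close>)
  thus False using AB pqv by (auto simp: sp_AB)
qed

theorem lemma1:
  fixes V :: "'a set" and w :: "'a \<Rightarrow> 'a \<Rightarrow> real" and C :: "'a set set"
    and y1 y2 y3 ym :: 'a and V' Cl :: "'a set"
  assumes graph: "weighted_graph V w"
    and admits: "\<exists>P. valid_partition V w P"
    and minC: "minimal_valid_partition V w C"
    and claw: "is_claw C w ym y1 y2 y3"
    and V'_sub: "V' \<subseteq> V"
    and V'_reps: "\<forall>S\<in>C. \<exists>!y. y \<in> S \<and> y \<in> V'"
    and ys_in: "y1 \<in> V'" "y2 \<in> V'" "y3 \<in> V'" "ym \<in> V'"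
    and Cl_sub: "Cl \<subseteq> V'"
    and Cl_ys: "y1 \<in> Cl" "y2 \<in> Cl" "y3 \<in> Cl"
    and Cl_clique: "\<forall>a\<in>Cl. \<forall>b\<in>Cl. a \<noteq> b \<longrightarrow> w a b < w y1 ym"
    and Cl_max: "\<forall>K. K \<subseteq> V' \<and> y1 \<in> K \<and> y2 \<in> K \<and> y3 \<in> K \<and>
                   (\<forall>a\<in>K. \<forall>b\<in>K. a \<noteq> b \<longrightarrow> w a b < w y1 ym) \<longrightarrow> card K \<le> card Cl"
  shows "(\<exists>P. valid_bipartition V w P) \<longleftrightarrow>
         (\<exists>y\<in>Cl. \<exists>S\<in>C. y \<in> S \<and> valid_partition V w {S, V - S})"
proof
  assume "\<exists>y\<in>Cl. \<exists>S\<in>C. y \<in> S \<and> valid_partition V w {S, V - S}"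
  then obtain S where vS: "valid_partition V w {S, V - S}" by blast
  have "card {S, V - S} > 1" using vS unfolding valid_partition_def is_partition_def by blast
  hence "S \<noteq> V - S" by (cases "S = V - S") auto
  hence "card {S, V - S} = 2" by simp
  thus "\<exists>P. valid_bipartition V w P" using vS unfolding valid_bipartition_def by blast
next
  assume "\<exists>P. valid_bipartition V w P"
  then obtain P where vP: "valid_partition V w P" and cP: "card P = 2"
    unfolding valid_bipartition_def by blast
  have partP: "is_partition V P" using vP unfolding valid_partition_def by blast
  have vC: "valid_partition V w C" using minC unfolding minimal_valid_partition_def by blast
  have partC: "is_partition V C" using vC unfolding valid_partition_def by blast
  have finV: "finite V" and sym: "\<forall>x\<in>V. \<forall>y\<in>V. w x y = w y x"
    using graph unfolding weighted_graph_def by auto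
  have ysV: "y1 \<in> V" "y2 \<in> V" "y3 \<in> V" "ym \<in> V" using ys_in V'_sub by auto
  obtain A0 B0 where P0: "P = {A0, B0}" "A0 \<noteq> B0" using cP by (meson card_2_iff)
  have "\<exists>A B. P = {A,B} \<and> A \<inter> B = {} \<and> A \<union> B = V \<and> ym \<in> A \<and> B \<noteq> {}"
  proof -
    have d: "A0 \<inter> B0 = {}" "A0 \<union> B0 = V" "A0 \<noteq> {}" "B0 \<noteq> {}"
      using partP P0 unfolding is_partition_def by auto
    show ?thesis
    proof (cases "ym \<in> A0")
      case True thus ?thesis using d P0 by blast
    next
      case False
      hence "ym \<in> B0" using d ysV by blast
      thus ?thesis using d P0 by (metis Int_commute Un_commute insert_commute)
    qed
  qed
  then obtain A B where AB: "P = {A,B}" "A \<inter> B = {}" "A \<union> B = V" "ym \<in> A" "B \<noteq> {}"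
    by blast
  have vAB: "valid_partition V w {A,B}" using vP AB by simp
  have ABV: "A \<subseteq> V" "B \<subseteq> V" using AB by auto
  have spP: "\<And>x y. same_part P x y \<longleftrightarrow> (x\<in>A \<and> y\<in>A) \<or> (x\<in>B \<and> y\<in>B)"
    using AB by (simp add: sp_AB)
  define W where "W = w ym y1"
  obtain Si Sj Sk Sl where cl: "Si\<in>C" "Sj\<in>C" "Sk\<in>C" "Sl\<in>C" "distinct [Si, Sj, Sk, Sl]"
    "ym \<in> Si" "y1 \<in> Sj" "y2 \<in> Sk" "y3 \<in> Sl"
    using claw unfolding is_claw_def by blast
  have cw: "w ym y2 = W" "w ym y3 = W" "w y1 y2 < W" "w y1 y3 < W" "w y2 y3 < W"
    using claw unfolding is_claw_def W_def by auto
  have dis: "distinct [ym, y1, y2, y3]"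
  proof -
    have "\<And>S T x. S \<in> C \<Longrightarrow> T \<in> C \<Longrightarrow> S \<noteq> T \<Longrightarrow> x \<in> S \<Longrightarrow> x \<notin> T"
      using partC unfolding is_partition_def by blast
    hence "\<And>S T x y. S \<in> C \<Longrightarrow> T \<in> C \<Longrightarrow> S \<noteq> T \<Longrightarrow> x \<in> S \<Longrightarrow> y \<in> T \<Longrightarrow> x \<noteq> y" by blast
    moreover have "Si \<noteq> Sj" "Si \<noteq> Sk" "Si \<noteq> Sl" "Sj \<noteq> Sk" "Sj \<noteq> Sl" "Sk \<noteq> Sl" using cl(5) by auto
    ultimately show ?thesis using cl(1-4,6-9) by simp
  qed
  have nsC: "\<not> same_part C ym y1" "\<not> same_part C ym y2" "\<not> same_part C ym y3"
  proof -
    have "Si \<noteq> Sj" "Si \<noteq> Sk" "Si \<noteq> Sl" using cl(5) by auto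
    thus "\<not> same_part C ym y1" "\<not> same_part C ym y2" "\<not> same_part C ym y3"
      using not_sp[OF partC] cl by blast+
  qed
  have twoB: False if "a \<in> B" "b \<in> B" "a \<noteq> b" "a \<in> V" "b \<in> V" "a \<noteq> ym" "b \<noteq> ym"
      "w ym a = w ym b" "w ym a > w a b" for a b
  proof -
    have "same_part P ym a"
      by (rule vp_ii[OF vP, of ym a b]) (use that ysV spP in auto)
    thus False using spP AB that by blast
  qed
  have yAB: "\<And>x. x \<in> V \<Longrightarrow> x \<in> A \<or> x \<in> B" using AB by blast
  have "\<exists>p q. p \<in> A \<and> q \<in> A \<and> p \<in> V \<and> q \<in> V \<and> w ym p = W \<and> w ym q = W \<and> w p q < W \<and>
        \<not> same_part C ym p \<and> p \<noteq> q \<and> p \<noteq> ym \<and> q \<noteq> ym"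
  proof -
    have s: "w y2 y1 = w y1 y2" "w y3 y1 = w y1 y3" "w y3 y2 = w y2 y3" using sym ysV by auto
    have "(y1 \<in> A \<and> y2 \<in> A) \<or> (y1 \<in> A \<and> y3 \<in> A) \<or> (y2 \<in> A \<and> y3 \<in> A)"
    proof (rule ccontr)
      assume a: "\<not> ?thesis"
      have "(y1 \<in> B \<and> y2 \<in> B) \<or> (y1 \<in> B \<and> y3 \<in> B) \<or> (y2 \<in> B \<and> y3 \<in> B)"
        using a yAB ysV by blast
      thus False
      proof (elim disjE conjE)
        assume "y1 \<in> B" "y2 \<in> B" thus False using twoB[of y1 y2] dis ysV cw W_def by auto
      next
        assume "y1 \<in> B" "y3 \<in> B" thus False using twoB[of y1 y3] dis ysV cw W_def by auto
      next
        assume "y2 \<in> B" "y3 \<in> B" thus False using twoB[of y2 y3] dis ysV cw W_def by auto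
      qed
    qed
    thus ?thesis using dis ysV cw W_def nsC by auto
  qed
  then obtain p q where pq: "p \<in> A" "q \<in> A" "p \<in> V" "q \<in> V" "w ym p = W" "w ym q = W"
    "w p q < W" "\<not> same_part C ym p" "p \<noteq> q" "p \<noteq> ym" "q \<noteq> ym" by blast
  have lightB: "w p v < W" if "v \<in> B" for v
    using cross_le[OF vAB AB(2) ABV sym pq(1,2) that pq(9)] pq(7) by linarith
  have ymB: "w ym v = W" if v: "v \<in> B" for v
  proof -
    have vV: "v \<in> V" "v \<notin> A" using v AB by auto
    have "w ym p \<le> max (w ym v) (w p v)"
      by (rule vp_i[OF vC]) (use vV pq ysV AB in auto)
    hence ge: "w ym v \<ge> W" using lightB[OF v] pq by (auto simp: max_def split: if_splits)
    have "w ym v \<le> max (w ym p) (w v p)"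
      by (rule vp_i[OF vP]) (use vV pq AB spP in auto)
    moreover have "w v p = w p v" using sym vV pq by auto
    ultimately have "w ym v \<le> W" using lightB[OF v] pq by (auto simp: max_def split: if_splits)
    thus ?thesis using ge by simp
  qed
  have sameB: "same_part C u v" if uv: "u \<in> B" "v \<in> B" "u \<noteq> v" for u v
  proof (rule ccontr)
    assume ns: "\<not> same_part C u v"
    have V: "u \<in> V" "v \<in> V" "u \<notin> A" "v \<notin> A" using uv AB by auto
    have "w u v \<le> max (w u p) (w v p)"
      by (rule vp_i[OF vC]) (use V pq ns uv in auto)
    moreover have "w u p = w p u" "w v p = w p v" using sym V pq by auto
    moreover have "w p u < W" "w p v < W" using lightB uv by auto
    ultimately have lt: "w u v < W" by (auto simp: max_def split: if_splits)
    have "same_part P ym u"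
      by (rule vp_ii[OF vP, of ym u v]) (use V pq uv ymB lt spP ysV AB in auto)
    thus False using spP V AB by blast
  qed
  obtain b0 where b0: "b0 \<in> B" using AB by blast
  have "b0 \<in> \<Union>C" using partC b0 AB unfolding is_partition_def by blast
  then obtain S where S: "S \<in> C" "b0 \<in> S" by blast
  have BS: "B \<subseteq> S"
  proof
    fix u assume u: "u \<in> B"
    show "u \<in> S"
    proof (cases "u = b0")
      case True thus ?thesis using S by simp
    next
      case False
      then obtain U where "U \<in> C" "u \<in> U" "b0 \<in> U" using sameB[OF u b0] unfolding same_part_def by blast
      moreover hence "U = S" using S partC unfolding is_partition_def by blast
      ultimately show ?thesis by simp
    qed
  qed
  have SB: "S \<subseteq> B"
  proof -
    obtain T where "T \<in> P" "S \<subseteq> T" using minC vP S unfolding minimal_valid_partition_def refines_def by blast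
    thus ?thesis using AB S b0 by auto
  qed
  have BeqS: "B = S" using BS SB by simp
  have AeqS: "A = V - S" using AB BeqS by blast
  have PS: "P = {S, V - S}" using AB(1) AeqS BeqS by (simp add: insert_commute)
  obtain y where y: "y \<in> S" "y \<in> V'" and yuniq: "\<And>z. z \<in> S \<Longrightarrow> z \<in> V' \<Longrightarrow> z = y"
  proof -
    have "\<exists>!y. y \<in> S \<and> y \<in> V'" using V'_reps S(1) by blast
    thus ?thesis using that by blast
  qed
  have W': "w y1 ym = W" using sym ysV W_def by auto
  have "y \<in> Cl"
  proof (rule ccontr)
    assume yn: "y \<notin> Cl"
    have yB: "y \<in> B" "y \<in> V" using y BeqS V'_sub by auto
    have ysA: "y1 \<in> A" "y2 \<in> A" "y3 \<in> A"
    proof -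
      have "y1 \<notin> S" "y2 \<notin> S" "y3 \<notin> S" using yuniq ys_in Cl_ys yn by blast+
      thus "y1 \<in> A" "y2 \<in> A" "y3 \<in> A" using ysV AeqS by simp_all
    qed
    have y1y: "w y1 y < W" using cross_le[OF vAB AB(2) ABV sym ysA(1,2) yB(1)] dis cw by simp
    have zy: "w z y < W" if z: "z \<in> Cl" for z
    proof (cases "z = y1")
      case True thus ?thesis using y1y by simp
    next
      case False
      have zV: "z \<in> V" "z \<in> V'" using z Cl_sub V'_sub by blast+
      have zy': "z \<noteq> y" using z yn by blast
      have "z \<notin> S" using yuniq zV(2) zy' by blast
      hence zA: "z \<in> A" "z \<in> V" "z \<noteq> y" using zV zy' AeqS by simp_all
      have "w z y \<le> max (w z y1) (w y y1)"
        by (rule vp_i[OF vP]) (use zA ysV False spP yB ysA AB in auto)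
      moreover have "w y y1 = w y1 y" using sym yB ysV by auto
      moreover have "w z y1 < W" using Cl_clique z Cl_ys(1) False W' by blast
      ultimately show ?thesis using y1y by (auto simp: max_def split: if_splits)
    qed
    have "\<forall>a\<in>insert y Cl. \<forall>b\<in>insert y Cl. a \<noteq> b \<longrightarrow> w a b < w y1 ym"
    proof (intro ballI impI)
      fix a b assume a: "a \<in> insert y Cl" and b: "b \<in> insert y Cl" and ab: "a \<noteq> b"
      show "w a b < w y1 ym"
      proof (cases "a = y")
        case True
        hence bC: "b \<in> Cl" using b ab by auto
        have "w a b = w b a" using sym True yB bC Cl_sub V'_sub by auto
        thus ?thesis using zy[OF bC] True W' by simp
      next
        case False
        hence aC: "a \<in> Cl" using a by auto
        show ?thesis
        proof (cases "b = y")
          case True thus ?thesis using zy[OF aC] W' by simp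
        next
          case False hence "b \<in> Cl" using b by blast
          thus ?thesis using aC ab Cl_clique by blast
        qed
      qed
    qed
    hence "insert y Cl \<subseteq> V' \<and> y1 \<in> insert y Cl \<and> y2 \<in> insert y Cl \<and> y3 \<in> insert y Cl \<and>
       (\<forall>a\<in>insert y Cl. \<forall>b\<in>insert y Cl. a \<noteq> b \<longrightarrow> w a b < w y1 ym)"
      using Cl_sub y Cl_ys by blast
    hence "card (insert y Cl) \<le> card Cl" by (rule mp[OF spec[OF Cl_max]])
    moreover have "finite Cl" using finite_subset[OF Cl_sub finite_subset[OF V'_sub finV]] .
    ultimately show False using yn by simp
  qed
  moreover have "valid_partition V w {S, V - S}" using vP PS by simp
  ultimately show "\<exists>y\<in>Cl. \<exists>S\<in>C. y \<in> S \<and> valid_partition V w {S, V - S}"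
    using S(1) y(1) by blast
qed

end
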